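(* For all real $a>0$, $b>0$ and every complex $s$ with $\Re(s)>1$, \[\sum_{k=0}^\infty (-1)^k \zeta(s,ka+b)=(2a)^{-s} \sum_{n=0}^\infty \Big\{\zeta\Big(s,\frac{n+b}{2a}\Big)-\zeta\Big(s,\frac{n+b}{2a}+\frac{1}{2}\Big)\Big\}.\]
   Context: $\zeta(s,\alpha)=\sum_{n=0}^\infty (n+\alpha)^{-s}$ denotes the Hurwitz zeta function ($\Re(s)>1$, $\alpha>0$). *)

theory Defs
  imports "HOL-Analysis.Analysis"
begin

text \<open>Hurwitz zeta function, defined by its series (intended for Re s > 1, alpha > 0).\<close>
definition hurwitz_zeta :: "complex \<Rightarrow> real \<Rightarrow> complex" where
  "hurwitz_zeta s \<alpha> = (\<Sum>n. (of_real (real n + \<alpha>)) powr (- s))"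

end

theory Submission imports Defs "HOL-Real_Asymp.Real_Asymp" begin

lemma norm_f: "x > 0 \<Longrightarrow> norm (complex_of_real x powr (- s)) = x powr (- Re s)"
  by (simp add: norm_powr_real_powr)

lemma summ_shift:
  fixes c d p :: real assumes "c > 0" "p > 1"
  shows "summable (\<lambda>n. (real n + c) powr (- p))"
proof (rule summable_comparison_test_ev)
  show "summable (\<lambda>n. real n powr (- p))"
    using summable_real_powr_iff[of "-p"] assms by simp
  show "eventually (\<lambda>n. norm ((real n + c) powr (- p)) \<le> real n powr (- p)) sequentially"
    using eventually_ge_at_top[of "1::nat"]
  proof eventually_elim
    case (elim n)
    then show ?case using assms by (auto intro!: powr_mono2')
  qed
qed

lemma summ_lin:
  fixes c d p :: real assumes "c > 0" "d > 0" "p > 1"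
  shows "summable (\<lambda>n. (d * real n + c) powr (- p))"
proof -
  have "(d * real n + c) powr (- p) = d powr (-p) * (real n + c/d) powr (- p)" for n
  proof -
    have "d * real n + c = d * (real n + c/d)" using assms by (simp add: field_simps)
    thus ?thesis using assms by (simp add: powr_mult)
  qed
  moreover have "summable (\<lambda>n. (real n + c/d) powr (- p))" using summ_shift assms by simp
  ultimately show ?thesis using summable_mult[of _ "d powr (-p)"] by simp
qed

lemma mvt_bound:
  fixes x d :: real assumes "x > 0" "d > 0" "Re s > 1"
  shows "norm (complex_of_real x powr (- s) - complex_of_real (x + d) powr (- s))
          \<le> norm s * x powr (- Re s - 1) * d"
proof -
  define S where "S = closed_segment (complex_of_real x) (complex_of_real (x + d))"
  have S: "S = of_real ` {x..x+d}"
    unfolding S_def using assms by (simp add: closed_segment_Reals closed_segment_eq_real_ivl)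
  have "norm (complex_of_real x powr (- s) - complex_of_real (x + d) powr (- s))
          \<le> (norm s * x powr (- Re s - 1)) * norm (complex_of_real x - complex_of_real (x+d))"
  proof (rule field_differentiable_bound[where S = S and f' = "\<lambda>z. (-s) * z powr (-s - 1)"])
    show "convex S" unfolding S_def by simp
    show "complex_of_real x \<in> S" "complex_of_real (x+d) \<in> S" unfolding S_def by auto
  next
    fix z assume "z \<in> S"
    then obtain t where t: "z = of_real t" "x \<le> t" "t \<le> x + d" using S by auto
    have nz: "z \<notin> \<real>\<^sub>\<le>\<^sub>0" using t assms by (auto simp: nonpos_Reals_def)
    show "((\<lambda>z. z powr (- s)) has_field_derivative (- s) * z powr (- s - 1)) (at z within S)"
      using has_field_derivative_powr[OF nz, of "-s"] by (rule has_field_derivative_at_within)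
    have "norm ((- s) * z powr (- s - 1)) = norm s * t powr (- Re s - 1)"
      using t assms by (simp add: norm_mult norm_powr_real_powr)
    also have "\<dots> \<le> norm s * x powr (- Re s - 1)"
      using t assms \<open>x > 0\<close> by (intro mult_left_mono powr_mono2') auto
    finally show "norm ((- s) * z powr (- s - 1)) \<le> norm s * x powr (- Re s - 1)" .
  qed
  also have "norm (complex_of_real x - complex_of_real (x+d)) = d"
    using assms by (simp flip: of_real_diff)
  finally show ?thesis .
qed

lemma lim_aux: "a > 0 \<Longrightarrow> b > 0 \<Longrightarrow> (p::real) > 0 \<Longrightarrow> (\<lambda>n::nat. (real k + (real n * a + b)) powr (- p)) \<longlonglongrightarrow> 0"
  by real_asymp

lemma pos_lin: "a > 0 \<Longrightarrow> b > 0 \<Longrightarrow> 0 < real k + (real n * a + b)"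
proof -
  assume "a > 0" "b > 0"
  hence "real n * a \<ge> 0" by simp
  thus ?thesis using \<open>b > 0\<close> by linarith
qed

lemma zeta_tends_zero:
  fixes a b :: real assumes "a > 0" "b > 0" "Re s > 1"
  shows "(\<lambda>M::nat. hurwitz_zeta s (real M * a + b)) \<longlonglongrightarrow> 0"
proof -
  define F where "F = (\<lambda>k n. complex_of_real (real k + (real n * a + b)) powr (-s))"
  have nF: "norm (F k n) = (real k + (real n * a + b)) powr (- Re s)" for k n
    unfolding F_def using assms by (intro norm_f pos_lin) 
  have "((\<lambda>n. suminf (\<lambda>k. F k n)) \<longlongrightarrow> suminf (\<lambda>_. 0::complex)) sequentially"
  proof (rule tannerys_theorem[where M = "\<lambda>k. (real k + b) powr (- Re s)", THEN conjunct2, THEN conjunct2])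
    fix k :: nat
    have "(\<lambda>n. norm (F k n)) \<longlonglongrightarrow> 0"
      unfolding nF using assms by (intro lim_aux) auto
    thus "(\<lambda>n. F k n) \<longlonglongrightarrow> 0"
      by (rule tendsto_norm_zero_cancel)
  next
    show "summable (\<lambda>k. (real k + b) powr (- Re s))" using summ_shift assms by simp
  next
    show "\<forall>\<^sub>F (k, n) in sequentially \<times>\<^sub>F sequentially. norm (F k n) \<le> (real k + b) powr (- Re s)"
    proof (rule always_eventually, clarify)
      fix k n :: nat
      show "norm (F k n) \<le> (real k + b) powr (- Re s)"
        unfolding nF using assms by (intro powr_mono2') auto
    qed
  qed simp
  thus ?thesis unfolding hurwitz_zeta_def F_def by simp
qed
lemma limseq_even_odd':
  assumes E: "(\<lambda>n. f (2 * n)) \<longlonglongrightarrow> (l :: 'a :: topological_space)"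
      and O: "(\<lambda>n. f (2 * n + 1)) \<longlonglongrightarrow> l"
  shows "f \<longlonglongrightarrow> l"
proof (rule topological_tendstoI)
  fix S assume S: "open S" "l \<in> S"
  from topological_tendstoD[OF E S] obtain n_e where ne: "\<And>n. n \<ge> n_e \<Longrightarrow> f (2*n) \<in> S"
    by (auto simp: eventually_sequentially)
  from topological_tendstoD[OF O S] obtain n_o where no: "\<And>n. n \<ge> n_o \<Longrightarrow> f (2*n+1) \<in> S"
    by (auto simp: eventually_sequentially)
  show "eventually (\<lambda>n. f n \<in> S) sequentially"
    unfolding eventually_sequentially
  proof (intro exI allI impI)
    fix n assume n: "max (2 * n_e) (2 * n_o + 1) \<le> n"
    show "f n \<in> S"
    proof (cases "even n")
      case True then obtain k where "n = 2*k" by (elim evenE)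
      thus ?thesis using n ne by auto
    next
      case False then obtain k where "n = 2*k+1" by (elim oddE)
      thus ?thesis using n no by auto
    qed
  qed
qed

lemma hz_summable: "y > 0 \<Longrightarrow> Re s > 1 \<Longrightarrow> summable (\<lambda>n. complex_of_real (real n + y) powr (- s))"
proof -
  assume y: "y > 0" and s: "Re s > 1"
  have "summable (\<lambda>n. norm (complex_of_real (real n + y) powr (- s)))"
  proof (subst norm_f)
    show "summable (\<lambda>n. (real n + y) powr (- Re s))" using summ_shift y s by simp
  qed (use y in auto)
  thus ?thesis by (rule summable_norm_cancel)
qed

theorem mainTheorem13:
  fixes a b :: real and s :: complex
  assumes "a > 0" and "b > 0" and "Re s > 1"
  shows "summable (\<lambda>n::nat. hurwitz_zeta s ((real n + b) / (2 * a))
                      - hurwitz_zeta s ((real n + b) / (2 * a) + 1 / 2)) \<and>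
         (\<lambda>k::nat. (-1) ^ k * hurwitz_zeta s (real k * a + b)) sums
           (of_real (2 * a) powr (- s) *
            (\<Sum>n. hurwitz_zeta s ((real n + b) / (2 * a))
                 - hurwitz_zeta s ((real n + b) / (2 * a) + 1 / 2)))"
proof -
  note a = \<open>a > 0\<close> and b = \<open>b > 0\<close> and s = \<open>Re s > 1\<close>
  define q where "q = (Re s + 1) / 2"
  have q: "q > 1" using s by (simp add: q_def)
  define f where "f = (\<lambda>x::real. complex_of_real x powr (- s))"
  define g where "g = (\<lambda>m n. f (2*a*real m + real n + b) - f (2*a*real m + a + real n + b))"
  define Z where "Z = hurwitz_zeta s"
  define D where "D = (\<lambda>m. Z (real (2*m) * a + b) - Z (real (2*m+1) * a + b))"
  define A where "A = (\<lambda>m::nat. (2*a*real m + b) powr (-q))"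
  define B where "B = (\<lambda>n::nat. (real n + b) powr (-q))"
  define C where "C = norm s * a"
  have pos: "0 < 2*a*real m + real n + b" for m n :: nat
  proof -
    have "0 \<le> 2*a*real m" using a by simp
    thus ?thesis using b by linarith
  qed
  have gsum: "summable (\<lambda>n. g m n)" and Dsum: "D m = (\<Sum>n. g m n)" for m
  proof -
    have e1: "real n + (real (2*m) * a + b) = 2*a*real m + real n + b" for n
      by (simp add: algebra_simps)
    have e2: "real n + (real (2*m+1) * a + b) = 2*a*real m + a + real n + b" for n
      by (simp add: algebra_simps)
    have p1: "real (2*m) * a + b > 0" "real (2*m+1) * a + b > 0"
      using pos[of m 0] a by (simp_all add: algebra_simps)
    have s1: "summable (\<lambda>n. f (2*a*real m + real n + b))"
      using hz_summable[OF p1(1) s] unfolding f_def e1 .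
    have s2: "summable (\<lambda>n. f (2*a*real m + a + real n + b))"
      using hz_summable[OF p1(2) s] unfolding f_def e2 .
    show "summable (\<lambda>n. g m n)" unfolding g_def using summable_diff[OF s1 s2] .
    show "D m = (\<Sum>n. g m n)"
      unfolding D_def Z_def hurwitz_zeta_def g_def e1 e2 f_def
      using suminf_diff[OF s1 s2, unfolded f_def] by simp
  qed
  have gbound: "norm (g m n) \<le> C * A m * B n" for m n
  proof -
    define x where "x = 2*a*real m + real n + b"
    have x: "x > 0" using pos unfolding x_def .
    have "norm (g m n) = norm (f x - f (x + a))"
      unfolding g_def x_def by (simp add: algebra_simps)
    also have "\<dots> \<le> norm s * x powr (- Re s - 1) * a"
      unfolding f_def using mvt_bound[OF x a s] .
    also have "x powr (- Re s - 1) = x powr (-q) * x powr (-q)"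
      unfolding q_def by (simp add: powr_add[symmetric])
    finally have h1: "norm (g m n) \<le> norm s * (x powr (-q) * x powr (-q)) * a" .
    have h2: "x powr (-q) \<le> A m"
      unfolding A_def x_def using q a b pos[of m 0] by (intro powr_mono2') auto
    have h3: "x powr (-q) \<le> B n"
    proof -
      have "0 \<le> 2*a*real m" using a by simp
      thus ?thesis unfolding B_def x_def using q a b by (intro powr_mono2') auto
    qed
    have "x powr (-q) * x powr (-q) \<le> A m * B n"
      using h2 h3 by (intro mult_mono) (auto simp: A_def)
    hence "norm s * (x powr (-q) * x powr (-q)) * a \<le> norm s * (A m * B n) * a"
      using a by (intro mult_right_mono mult_left_mono) auto
    with h1 show ?thesis unfolding C_def by (simp add: algebra_simps)
  qed
  have Apos: "A m \<ge> 0" and Bpos: "B n \<ge> 0" for m n unfolding A_def B_def by auto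
  have Cpos: "C \<ge> 0" unfolding C_def using a by simp
  have Asum: "summable A" unfolding A_def using summ_lin[of b "2*a" q] a b q by simp
  have Bsum: "summable B" unfolding B_def using summ_shift[of b q] b q by simp
  define SA where "SA = suminf A"
  have gsum2: "summable (\<lambda>m. g m k)" for k
    proof (rule summable_comparison_test)
      show "\<exists>N. \<forall>n\<ge>N. norm (g n k) \<le> C * B k * A n"
        using gbound by (auto simp: algebra_simps)
      show "summable (\<lambda>n. C * B k * A n)" using Asum by (rule summable_mult)
    qed
  have tan: "eventually (\<lambda>N. summable (\<lambda>k. norm (\<Sum>m<N. g m k))) sequentially \<and>
           summable (\<lambda>k. norm (\<Sum>m. g m k)) \<and>
           ((\<lambda>N. \<Sum>k. \<Sum>m<N. g m k) \<longlongrightarrow> (\<Sum>k. \<Sum>m. g m k)) sequentially"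
  proof (rule tannerys_theorem[where M = "\<lambda>k. C * SA * B k"])
    fix k :: nat
    show "(\<lambda>N. \<Sum>m<N. g m k) \<longlonglongrightarrow> (\<Sum>m. g m k)"
      using gsum2 by (rule summable_LIMSEQ)
  next
    show "summable (\<lambda>k. C * SA * B k)" using Bsum by (rule summable_mult)
  next
    show "\<forall>\<^sub>F (k, N) in sequentially \<times>\<^sub>F sequentially. norm (\<Sum>m<N. g m k) \<le> C * SA * B k"
    proof (rule always_eventually, clarify)
      fix k N :: nat
      have "norm (\<Sum>m<N. g m k) \<le> (\<Sum>m<N. norm (g m k))" by (rule norm_sum)
      also have "\<dots> \<le> (\<Sum>m<N. C * B k * A m)"
        using gbound by (intro sum_mono) (auto simp: algebra_simps)
      also have "\<dots> = C * B k * (\<Sum>m<N. A m)" by (simp add: sum_distrib_left)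
      also have "\<dots> \<le> C * B k * SA"
      proof (rule mult_left_mono)
        show "(\<Sum>m<N. A m) \<le> SA" unfolding SA_def
          using Asum Apos by (intro sum_le_suminf) auto
        show "0 \<le> C * B k" using Cpos Bpos[of k] by simp
      qed
      finally show "norm (\<Sum>m<N. g m k) \<le> C * SA * B k"
        by (simp add: algebra_simps)
    qed
  qed simp
  define T where "T = (\<Sum>k. \<Sum>m. g m k)"
  have Dsums: "D sums T"
  proof -
    have "(\<Sum>k. \<Sum>m<N. g m k) = (\<Sum>m<N. D m)" for N
      unfolding Dsum using gsum by (subst suminf_sum) auto
    thus ?thesis using tan unfolding sums_def T_def by simp
  qed
  define P where "P = (\<lambda>K. \<Sum>k<K. (-1) ^ k * Z (real k * a + b))"
  have Peven: "P (2*N) = (\<Sum>m<N. D m)" for N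
  proof (induction N)
    case 0 show ?case by (simp add: P_def)
  next
    case (Suc N)
    have "P (2 * Suc N) = P (2*N) + Z (real (2*N) * a + b) - Z (real (2*N+1) * a + b)"
      unfolding P_def by (simp add: algebra_simps)
    thus ?case using Suc by (simp add: D_def)
  qed
  have L1: "(\<lambda>N. P (2*N)) \<longlonglongrightarrow> T" unfolding Peven using Dsums by (simp add: sums_def)
  have Z0: "(\<lambda>N. Z (real (2*N) * a + b)) \<longlonglongrightarrow> 0"
  proof -
    have "(\<lambda>N::nat. hurwitz_zeta s (real N * (2*a) + b)) \<longlonglongrightarrow> 0"
      using zeta_tends_zero[of "2*a" b s] a b s by simp
    thus ?thesis unfolding Z_def by (simp add: algebra_simps)
  qed
  have L2: "(\<lambda>N. P (2*N+1)) \<longlonglongrightarrow> T"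
  proof -
    have "P (2*N+1) = P (2*N) + Z (real (2*N) * a + b)" for N
      unfolding P_def by simp
    thus ?thesis using tendsto_add[OF L1 Z0] by simp
  qed
  have LHS: "(\<lambda>k. (-1) ^ k * Z (real k * a + b)) sums T"
    unfolding sums_def P_def[symmetric] using L1 L2 by (rule limseq_even_odd')
  define c where "c = 1 / (2*a)"
  define cs where "cs = complex_of_real c powr (-s)"
  have fc: "f (c * x) = cs * f x" if "x > 0" for x
  proof -
    have c0: "c > 0" unfolding c_def using a by simp
    have "f (c * x) = (complex_of_real c * complex_of_real x) powr (-s)"
      unfolding f_def by simp
    also have "\<dots> = complex_of_real c powr (-s) * complex_of_real x powr (-s)"
      by (rule powr_times_real) (use c0 that in auto)
    finally show ?thesis unfolding cs_def f_def .
  qed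
  have G: "Z ((real n + b) / (2 * a)) - Z ((real n + b) / (2 * a) + 1 / 2) = cs * (\<Sum>m. g m n)" for n
  proof -
    have y1: "(real n + b) / (2 * a) > 0" using a b by simp
    have y2: "(real n + b) / (2 * a) + 1/2 > 0" using y1 by linarith
    have e1: "complex_of_real (real m + (real n + b) / (2 * a)) powr (-s) = cs * f (2*a*real m + real n + b)" for m
    proof -
      have eq: "real m + (real n + b) / (2 * a) = c * (2*a*real m + real n + b)"
        unfolding c_def using a by (simp add: field_simps)
      have "complex_of_real (real m + (real n + b) / (2 * a)) powr (-s) = f (c * (2*a*real m + real n + b))"
        unfolding f_def eq ..
      also have "\<dots> = cs * f (2*a*real m + real n + b)" by (rule fc[OF pos])
      finally show ?thesis .
    qed
    have e2: "complex_of_real (real m + ((real n + b) / (2 * a) + 1/2)) powr (-s) = cs * f (2*a*real m + a + real n + b)" for m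
    proof -
      have eq: "real m + ((real n + b) / (2 * a) + 1/2) = c * (2*a*real m + a + real n + b)"
        unfolding c_def using a by (simp add: field_simps)
      have p: "2*a*real m + a + real n + b > 0" using pos[of m n] a by simp
      have "complex_of_real (real m + ((real n + b) / (2 * a) + 1/2)) powr (-s) = f (c * (2*a*real m + a + real n + b))"
        unfolding f_def eq ..
      also have "\<dots> = cs * f (2*a*real m + a + real n + b)" by (rule fc[OF p])
      finally show ?thesis .
    qed
    have S1: "summable (\<lambda>m. cs * f (2*a*real m + real n + b))"
      using hz_summable[OF y1 s] unfolding e1 .
    have S2: "summable (\<lambda>m. cs * f (2*a*real m + a + real n + b))"
      using hz_summable[OF y2 s] unfolding e2 .
    have "Z ((real n + b) / (2 * a)) - Z ((real n + b) / (2 * a) + 1 / 2)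
        = (\<Sum>m. cs * f (2*a*real m + real n + b)) - (\<Sum>m. cs * f (2*a*real m + a + real n + b))"
      unfolding Z_def hurwitz_zeta_def e1 e2 ..
    also have "\<dots> = (\<Sum>m. cs * f (2*a*real m + real n + b) - cs * f (2*a*real m + a + real n + b))"
      by (rule suminf_diff[OF S1 S2])
    also have "\<dots> = (\<Sum>m. cs * g m n)" unfolding g_def by (simp add: algebra_simps)
    also have "\<dots> = cs * (\<Sum>m. g m n)" by (rule suminf_mult[OF gsum2])
    finally show ?thesis .
  qed
  have tsum: "summable (\<lambda>k. \<Sum>m. g m k)"
  proof (rule summable_norm_cancel)
    show "summable (\<lambda>k. norm (\<Sum>m. g m k))" using tan by (rule conjunct1[OF conjunct2])
  qed
  have one: "complex_of_real (2 * a) powr (- s) * cs = 1"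
  proof -
    have c0: "c \<ge> 0" using a by (simp add: c_def)
    have "complex_of_real (2 * a) powr (- s) * cs = (complex_of_real (2*a) * complex_of_real c) powr (-s)"
      unfolding cs_def by (rule powr_times_real[symmetric]) (use a c0 in auto)
    also have "complex_of_real (2*a) * complex_of_real c = 1"
    proof -
      have "(2*a) * c = 1" using a by (simp add: c_def)
      thus ?thesis by (metis of_real_1 of_real_mult)
    qed
    finally show ?thesis by simp
  qed
  have Gfun: "(\<lambda>n. hurwitz_zeta s ((real n + b) / (2 * a))
                      - hurwitz_zeta s ((real n + b) / (2 * a) + 1 / 2)) = (\<lambda>n. cs * (\<Sum>m. g m n))"
    using G unfolding Z_def by (intro ext) 
  show ?thesis
    unfolding Gfun
  proof
    show "summable (\<lambda>n. cs * (\<Sum>m. g m n))"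
      by (rule summable_mult[OF tsum])
    have h1: "(\<Sum>n. cs * (\<Sum>m. g m n)) = cs * T"
      unfolding T_def by (rule suminf_mult[OF tsum])
    have h2: "complex_of_real (2 * a) powr (- s) * (cs * T) = T"
      using one by (simp only: mult.assoc[symmetric] mult_1)
    have eq: "complex_of_real (2 * a) powr (- s) * (\<Sum>n. cs * (\<Sum>m. g m n)) = T"
      by (simp only: h1 h2)
    show "(\<lambda>k::nat. (-1) ^ k * hurwitz_zeta s (real k * a + b)) sums
           (of_real (2 * a) powr (- s) * (\<Sum>n. cs * (\<Sum>m. g m n)))"
      unfolding eq using LHS unfolding Z_def .
  qed
qed
end
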